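(* Let $X$ be a path-connected uniform space with base point $x_0$. Then the uniform structure of $X$ is generated by the end-point projection $\pi_X\colon\widetilde X\to X$ if and only if for each entourage $E$ of $X$ there is an entourage $F$ of $X$ such that for every $x\in X$ any two points of $B(x,F)$ can be joined by a path contained in $B(x,E)$.
   Context: $B(x,E)=\{y:(x,y)\in E\}$; $f(E)=\{(f(x),f(y)):(x,y)\in E\}$. A surjection $f\colon Z\to X$ from a uniform space generates the uniform structure of $X$ if $\{f(E)\}$, $E$ an entourage of $Z$, is a base of the uniform structure of $X$. $\widetilde X$ is the set of homotopy classes rel. end-points of paths in $X$ starting at $x_0$, and $\pi_X([\alpha])=\alpha(1)$. $\widetilde X$ carries the basic uniform structure with base $\{E^\ast\}$, $E$ an entourage of $X$, where $E^\ast$ is the set of pairs $([\alpha],[\beta])$ such that $\alpha^{-1}\ast\beta$ is homotopic rel. end-points to a path contained in $B(z,E)$ for some $z\in X$. *)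

theory Defs
  imports "HOL-Analysis.Analysis"
begin

text \<open>Entourages of a uniform space (type class uniform_space; the topology is the
uniform one, by the class axiom open_uniformity).\<close>
definition entourage :: "('a::uniform_space \<times> 'a) set \<Rightarrow> bool" where
  "entourage E \<longleftrightarrow> eventually (\<lambda>p. p \<in> E) uniformity"

definition Bent :: "'a \<Rightarrow> ('a \<times> 'a) set \<Rightarrow> 'a set" where
  "Bent x E = {y. (x, y) \<in> E}"

definition pimage :: "('z \<Rightarrow> 'a) \<Rightarrow> ('z \<times> 'z) set \<Rightarrow> ('a \<times> 'a) set" where
  "pimage f E = (\<lambda>(x, y). (f x, f y)) ` E"

text \<open>A surjection f from Z (with entourage family EntZ) generates the uniform
structure of the uniform space 'a: the family of images f(D), D an entourage of Z,
is a base of the uniformity of 'a.\<close>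
definition generates_uniformity ::
  "'z set \<Rightarrow> (('z \<times> 'z) set \<Rightarrow> bool) \<Rightarrow> ('z \<Rightarrow> 'a::uniform_space) \<Rightarrow> bool" where
  "generates_uniformity Z EntZ f \<longleftrightarrow>
     f ` Z = UNIV \<and>
     (\<forall>D. EntZ D \<longrightarrow> entourage (pimage f D)) \<and>
     (\<forall>E. entourage E \<longrightarrow> (\<exists>D. EntZ D \<and> pimage f D \<subseteq> E))"

definition paths_from :: "'a::topological_space \<Rightarrow> (real \<Rightarrow> 'a) set" where
  "paths_from x0 = {g. path g \<and> pathstart g = x0}"

definition Xtilde :: "'a::topological_space \<Rightarrow> (real \<Rightarrow> 'a) set set" where
  "Xtilde x0 = paths_from x0 // {(g, h). homotopic_paths UNIV g h}"

definition endproj :: "(real \<Rightarrow> 'a::topological_space) set \<Rightarrow> 'a" where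
  "endproj A = pathfinish (SOME g. g \<in> A)"

definition Estar :: "'a::topological_space \<Rightarrow> ('a \<times> 'a) set \<Rightarrow>
    ((real \<Rightarrow> 'a) set \<times> (real \<Rightarrow> 'a) set) set" where
  "Estar x0 E = {(A, B). A \<in> Xtilde x0 \<and> B \<in> Xtilde x0 \<and>
     (\<exists>\<alpha>\<in>A. \<exists>\<beta>\<in>B. \<exists>z \<gamma>. path \<gamma> \<and> path_image \<gamma> \<subseteq> Bent z E \<and>
        homotopic_paths UNIV (reversepath \<alpha> +++ \<beta>) \<gamma>)}"

definition tilde_entourage :: "'a::uniform_space \<Rightarrow>
    ((real \<Rightarrow> 'a) set \<times> (real \<Rightarrow> 'a) set) set \<Rightarrow> bool" where
  "tilde_entourage x0 D \<longleftrightarrow> D \<subseteq> Xtilde x0 \<times> Xtilde x0 \<and>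
     (\<exists>E. entourage E \<and> Estar x0 E \<subseteq> D)"

end

theory Submission
  imports Defs
begin
lemma cancel_hom:
  fixes \<alpha> \<gamma> :: "real \<Rightarrow> 'a::topological_space"
  assumes pa: "path \<alpha>" and pg: "path \<gamma>" and e: "pathfinish \<alpha> = pathstart \<gamma>"
  shows "homotopic_paths UNIV (reversepath \<alpha> +++ (\<alpha> +++ \<gamma>)) \<gamma>"
proof -
  define P where "P = \<alpha> +++ \<gamma>"
  have pP: "path P" using pa pg e by (simp add: P_def)
  define f :: "real \<Rightarrow> real" where "f = reversepath (linepath 0 (1/2)) +++ linepath 0 1"
  define g :: "real \<Rightarrow> real" where "g = linepath (1/2) 1"
  have pf: "path f" by (simp add: f_def)
  have pgg: "path g" by (simp add: g_def)
  have imf: "path_image f \<subseteq> {0..1}"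
    by (auto simp: f_def path_image_join closed_segment_eq_real_ivl)
  have img: "path_image g \<subseteq> {0..1}"
    by (auto simp: g_def closed_segment_eq_real_ivl)
  have "homotopic_paths {0..1} f g"
  proof (rule homotopic_paths_linear[OF pf pgg])
    show "pathstart g = pathstart f" by (simp add: f_def g_def)
    show "pathfinish g = pathfinish f" by (simp add: f_def g_def)
    fix t :: real assume t: "t \<in> {0..1}"
    have "f t \<in> {0..1}" "g t \<in> {0..1}" using imf img t unfolding path_image_def by blast+
    then show "closed_segment (f t) (g t) \<subseteq> {0..1}"
      by (simp add: closed_segment_subset)
  qed
  then have h1: "homotopic_paths UNIV (P \<circ> f) (P \<circ> g)"
    by (rule homotopic_paths_continuous_image) (use pP in \<open>auto simp: path_def\<close>)
  have h2: "homotopic_paths UNIV (reversepath \<alpha> +++ P) (P \<circ> f)"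
  proof (rule homotopic_paths_eq)
    show "path (reversepath \<alpha> +++ P)" using pa pP by (simp add: P_def)
    show "path_image (reversepath \<alpha> +++ P) \<subseteq> UNIV" by simp
    fix t :: real assume t: "t \<in> {0..1}"
    show "(reversepath \<alpha> +++ P) t = (P \<circ> f) t"
      using t apply (auto simp: f_def P_def joinpaths_def reversepath_def linepath_def algebra_simps)
      by (rule arg_cong[where f=\<alpha>]) simp
  qed
  have h3: "homotopic_paths UNIV (P \<circ> g) \<gamma>"
  proof (rule homotopic_paths_eq)
    show "path (P \<circ> g)" using pP pgg imf img
      by (meson h1 homotopic_paths_imp_path)
    show "path_image (P \<circ> g) \<subseteq> UNIV" by simp
    fix t :: real assume t: "t \<in> {0..1}"
    show "(P \<circ> g) t = \<gamma> t"
    proof -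
      have gt: "g t = (1 + t) / 2" by (simp add: g_def linepath_def field_simps)
      show ?thesis
      proof (cases "t = 0")
        case True then have "g t = 1/2" using gt by simp then show ?thesis using e True by (simp add: mult.commute P_def joinpaths_def pathstart_def pathfinish_def)
      next
        case False
        then have "\<not> (1 + t)/2 \<le> 1/2" using t by simp
        moreover have "2 * ((1 + t) / 2) - 1 = t" by (simp add: field_simps) ultimately show ?thesis by (simp only: gt P_def joinpaths_def comp_def if_False mult.commute)
      qed
    qed
  qed
  show ?thesis unfolding P_def[symmetric]
    using h2 h1 h3 homotopic_paths_trans by blast
qed

lemma ent_mono: "entourage E \<Longrightarrow> E \<subseteq> F \<Longrightarrow> entourage F"
  unfolding entourage_def by (auto elim: eventually_mono)

lemma ent_refl: "entourage E \<Longrightarrow> (x, x) \<in> E"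
  unfolding entourage_def using uniformity_refl[of "\<lambda>p. p \<in> E"] by blast

lemma ent_half:
  assumes "entourage E"
  shows "\<exists>E1. entourage E1 \<and> (\<forall>x y z. (y, x) \<in> E1 \<longrightarrow> (y, z) \<in> E1 \<longrightarrow> (x, z) \<in> E)"
proof -
  obtain D where D: "eventually D uniformity" "\<And>x y z. D (x, y) \<Longrightarrow> D (y, z) \<Longrightarrow> (x, z) \<in> E"
    using uniformity_transE[of "\<lambda>p. p \<in> E"] assms unfolding entourage_def by blast
  define E1 where "E1 = {p. D p \<and> D (snd p, fst p)}"
  have "eventually (\<lambda>(x, y). D (y, x)) uniformity" using uniformity_sym[OF D(1)] .
  then have "eventually (\<lambda>p. D p \<and> D (snd p, fst p)) uniformity"
    using D(1) by (rule eventually_elim2) (auto simp: case_prod_beta)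
  then have "entourage E1" unfolding entourage_def E1_def by simp
  moreover have "\<forall>x y z. (y, x) \<in> E1 \<longrightarrow> (y, z) \<in> E1 \<longrightarrow> (x, z) \<in> E"
    using D(2) unfolding E1_def by auto
  ultimately show ?thesis by blast
qed

definition hrel :: "((real \<Rightarrow> 'a::topological_space) \<times> (real \<Rightarrow> 'a)) set" where
  "hrel = {(g, h). homotopic_paths UNIV g h}"

lemma class_in: "path g \<Longrightarrow> pathstart g = x0 \<Longrightarrow> hrel `` {g} \<in> Xtilde x0"
  unfolding Xtilde_def hrel_def by (rule quotientI) (simp add: paths_from_def)

lemma class_self: "path g \<Longrightarrow> g \<in> hrel `` {g}"
  unfolding hrel_def by simp

lemma Xtilde_elem: "A \<in> Xtilde x0 \<Longrightarrow> \<exists>g. path g \<and> pathstart g = x0 \<and> A = hrel `` {g}"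
  unfolding Xtilde_def hrel_def paths_from_def by (erule quotientE) auto

lemma endproj_eq:
  assumes "A \<in> Xtilde x0" "h \<in> A"
  shows "endproj A = pathfinish h"
proof -
  obtain g where g: "A = hrel `` {g}" using Xtilde_elem[OF assms(1)] by blast
  have "(SOME k. k \<in> A) \<in> A" using assms(2) by (rule someI[where P="\<lambda>k. k \<in> A"])
  then have "homotopic_paths UNIV g (SOME k. k \<in> A)" "homotopic_paths UNIV g h"
    using assms(2) g by (auto simp: hrel_def)
  then show ?thesis unfolding endproj_def by (metis homotopic_paths_imp_pathfinish)
qed

lemma Estar_sub:
  assumes "(A, B) \<in> Estar x0 E"
  shows "\<exists>z \<gamma>. path \<gamma> \<and> pathstart \<gamma> = endproj A \<and> pathfinish \<gamma> = endproj B \<and> path_image \<gamma> \<subseteq> Bent z E"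
proof -
  from assms obtain \<alpha> \<beta> z \<gamma> where AB: "A \<in> Xtilde x0" "B \<in> Xtilde x0" "\<alpha> \<in> A" "\<beta> \<in> B"
    and g: "path \<gamma>" "path_image \<gamma> \<subseteq> Bent z E" "homotopic_paths UNIV (reversepath \<alpha> +++ \<beta>) \<gamma>"
    unfolding Estar_def by blast
  have "pathstart \<gamma> = pathfinish \<alpha>" "pathfinish \<gamma> = pathfinish \<beta>"
    using homotopic_paths_imp_pathstart[OF g(3)] homotopic_paths_imp_pathfinish[OF g(3)] by auto
  then show ?thesis using g endproj_eq AB by metis
qed

lemma Estar_sup:
  assumes pc: "path_connected (UNIV :: 'a::topological_space set)"
    and g: "path \<gamma>" "path_image \<gamma> \<subseteq> Bent z E"
  shows "(pathstart \<gamma>, pathfinish \<gamma>) \<in> pimage endproj (Estar (x0::'a) E)"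
proof -
  obtain \<alpha> where a: "path \<alpha>" "pathstart \<alpha> = x0" "pathfinish \<alpha> = pathstart \<gamma>"
    using pc unfolding path_connected_def by blast
  define \<beta> where "\<beta> = \<alpha> +++ \<gamma>"
  have b: "path \<beta>" "pathstart \<beta> = x0" "pathfinish \<beta> = pathfinish \<gamma>"
    using a g by (auto simp: \<beta>_def)
  define A where "A = hrel `` {\<alpha>}"
  define B where "B = hrel `` {\<beta>}"
  have AB: "A \<in> Xtilde x0" "B \<in> Xtilde x0" "\<alpha> \<in> A" "\<beta> \<in> B"
    using class_in class_self a b by (auto simp: A_def B_def)
  have "homotopic_paths UNIV (reversepath \<alpha> +++ \<beta>) \<gamma>"
    unfolding \<beta>_def using cancel_hom a g by blast
  then have "(A, B) \<in> Estar x0 E" unfolding Estar_def using AB g by blast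
  moreover have "endproj A = pathstart \<gamma>" "endproj B = pathfinish \<gamma>"
    using endproj_eq[OF AB(1,3)] endproj_eq[OF AB(2,4)] a b by auto
  ultimately show ?thesis unfolding pimage_def by force
qed

theorem mainTheorem4:
  fixes x0 :: "'a::uniform_space"
  assumes "path_connected (UNIV :: 'a set)"
  shows "generates_uniformity (Xtilde x0) (tilde_entourage x0) endproj \<longleftrightarrow>
    (\<forall>E :: ('a \<times> 'a) set. entourage E \<longrightarrow> (\<exists>F :: ('a \<times> 'a) set. entourage F \<and>
       (\<forall>x. \<forall>y\<in>Bent x F. \<forall>z\<in>Bent x F. \<exists>g. path g \<and> pathstart g = y \<and>
          pathfinish g = z \<and> path_image g \<subseteq> Bent x E)))"
proof
  assume L: "generates_uniformity (Xtilde x0) (tilde_entourage x0) endproj"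
  show "\<forall>E :: ('a \<times> 'a) set. entourage E \<longrightarrow> (\<exists>F :: ('a \<times> 'a) set. entourage F \<and>
       (\<forall>x. \<forall>y\<in>Bent x F. \<forall>z\<in>Bent x F. \<exists>g. path g \<and> pathstart g = y \<and>
          pathfinish g = z \<and> path_image g \<subseteq> Bent x E))"
  proof (intro allI impI)
    fix E :: "('a \<times> 'a) set" assume E: "entourage E"
    obtain E1 where E1: "entourage E1" "\<And>x y z. (y, x) \<in> E1 \<Longrightarrow> (y, z) \<in> E1 \<Longrightarrow> (x, z) \<in> E"
      using ent_half[OF E] by blast
    define F where "F = pimage endproj (Estar x0 E1)"
    have "tilde_entourage x0 (Estar x0 E1)"
      unfolding tilde_entourage_def using E1(1) by (auto simp: Estar_def)
    then have F: "entourage F" using L unfolding generates_uniformity_def F_def by blast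
    have key: "\<exists>g. path g \<and> pathstart g = x \<and> pathfinish g = y \<and> path_image g \<subseteq> Bent x E"
      if "y \<in> Bent x F" for x y
    proof -
      from that obtain A B where "(A, B) \<in> Estar x0 E1" "x = endproj A" "y = endproj B"
        unfolding F_def Bent_def pimage_def by auto
      then obtain w \<gamma> where g: "path \<gamma>" "pathstart \<gamma> = x" "pathfinish \<gamma> = y" "path_image \<gamma> \<subseteq> Bent w E1"
        using Estar_sub by metis
      have "(w, x) \<in> E1" using g(2,4) pathstart_in_path_image[of \<gamma>] by (auto simp: Bent_def)
      then have "path_image \<gamma> \<subseteq> Bent x E" using g(4) E1(2) by (auto simp: Bent_def)
      then show ?thesis using g by blast
    qed
    have "\<forall>x. \<forall>y\<in>Bent x F. \<forall>z\<in>Bent x F. \<exists>g. path g \<and> pathstart g = y \<and>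
          pathfinish g = z \<and> path_image g \<subseteq> Bent x E"
    proof (intro allI ballI)
      fix x y z assume "y \<in> Bent x F" "z \<in> Bent x F"
      then obtain g h where g: "path g" "pathstart g = x" "pathfinish g = y" "path_image g \<subseteq> Bent x E"
        and h: "path h" "pathstart h = x" "pathfinish h = z" "path_image h \<subseteq> Bent x E"
        using key by meson
      show "\<exists>g. path g \<and> pathstart g = y \<and> pathfinish g = z \<and> path_image g \<subseteq> Bent x E"
        apply (rule exI[of _ "reversepath g +++ h"])
        using g h by (auto simp: path_image_join)
    qed
    then show "\<exists>F. entourage F \<and> (\<forall>x. \<forall>y\<in>Bent x F. \<forall>z\<in>Bent x F. \<exists>g. path g \<and> pathstart g = y \<and>
          pathfinish g = z \<and> path_image g \<subseteq> Bent x E)" using F by blast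
  qed
next
  assume R: "\<forall>E :: ('a \<times> 'a) set. entourage E \<longrightarrow> (\<exists>F :: ('a \<times> 'a) set. entourage F \<and>
       (\<forall>x. \<forall>y\<in>Bent x F. \<forall>z\<in>Bent x F. \<exists>g. path g \<and> pathstart g = y \<and>
          pathfinish g = z \<and> path_image g \<subseteq> Bent x E))"
  have surj: "endproj ` Xtilde x0 = UNIV"
  proof (intro subset_antisym subsetI)
    fix x :: 'a
    obtain \<alpha> where a: "path \<alpha>" "pathstart \<alpha> = x0" "pathfinish \<alpha> = x"
      using assms unfolding path_connected_def by blast
    have "hrel `` {\<alpha>} \<in> Xtilde x0" "endproj (hrel `` {\<alpha>}) = x"
      using class_in class_self endproj_eq a by metis+
    then show "x \<in> endproj ` Xtilde x0" by (metis image_eqI)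
  qed auto
  have ent2: "entourage (pimage endproj D)" if D: "tilde_entourage x0 D" for D
  proof -
    obtain E where E: "entourage E" "Estar x0 E \<subseteq> D" using D unfolding tilde_entourage_def by blast
    obtain F where F: "entourage F" "\<forall>x. \<forall>y\<in>Bent x F. \<forall>z\<in>Bent x F. \<exists>g. path g \<and> pathstart g = y \<and>
          pathfinish g = z \<and> path_image g \<subseteq> Bent x E" using R[rule_format, OF E(1)] by (elim exE conjE)
    have "F \<subseteq> pimage endproj (Estar x0 E)"
    proof
      fix p assume p: "p \<in> F"
      obtain x y where xy: "p = (x, y)" by (cases p)
      have "x \<in> Bent x F" using ent_refl[OF F(1)] by (simp add: Bent_def)
      moreover have "y \<in> Bent x F" using p xy by (simp add: Bent_def)
      ultimately have "\<exists>g. path g \<and> pathstart g = x \<and> pathfinish g = y \<and> path_image g \<subseteq> Bent x E"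
        using F(2)[rule_format] by presburger
      then obtain g where g: "path g" "pathstart g = x" "pathfinish g = y" "path_image g \<subseteq> Bent x E"
        by (elim exE conjE)
      show "p \<in> pimage endproj (Estar x0 E)" using Estar_sup[OF assms g(1) g(4)] g xy by simp
    qed
    also have "\<dots> \<subseteq> pimage endproj D" using E(2) unfolding pimage_def by blast
    finally show ?thesis by (rule ent_mono[OF F(1)])
  qed
  have ent3: "\<exists>D. tilde_entourage x0 D \<and> pimage endproj D \<subseteq> E" if E: "entourage E" for E
  proof -
    obtain E1 where E1: "entourage E1" "\<And>x y z. (y, x) \<in> E1 \<Longrightarrow> (y, z) \<in> E1 \<Longrightarrow> (x, z) \<in> E"
      using ent_half[OF E] by blast
    have "tilde_entourage x0 (Estar x0 E1)"
      unfolding tilde_entourage_def using E1(1) by (auto simp: Estar_def)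
    moreover have "pimage endproj (Estar x0 E1) \<subseteq> E"
    proof
      fix p assume "p \<in> pimage endproj (Estar x0 E1)"
      then obtain A B where AB: "(A, B) \<in> Estar x0 E1" "p = (endproj A, endproj B)"
        unfolding pimage_def by auto
      then obtain w \<gamma> where g: "path \<gamma>" "pathstart \<gamma> = endproj A" "pathfinish \<gamma> = endproj B"
        "path_image \<gamma> \<subseteq> Bent w E1"
        using Estar_sub by metis
      have "(w, endproj A) \<in> E1" "(w, endproj B) \<in> E1"
        using g pathstart_in_path_image[of \<gamma>] pathfinish_in_path_image[of \<gamma>] by (auto simp: Bent_def)
      then show "p \<in> E" using E1(2) AB by auto
    qed
    ultimately show ?thesis by blast
  qed
  show "generates_uniformity (Xtilde x0) (tilde_entourage x0) endproj"
    unfolding generates_uniformity_def using surj ent2 ent3 by blast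
qed

end
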